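(* Let $(A,B)$ be a Katsura pair. Then the KEP-action $(G_B,E_A)$ is regular if and only if $(G_{B,\infty},E_{A_\infty})$ and $(G_{B_{<\infty}},E_{A_{<\infty}})$ are regular.
   Context: Katsura pair: $N\in\mathbb{N}$, $A\in M_N(\mathbb{N})$ (nonnegative integers), $B\in M_N(\mathbb{Z})$ with $A_{ij}=0\Rightarrow B_{ij}=0$. Graph $E_A$: vertices $\{1,\dots,N\}$, edges $e_{i,j,m}$ ($0\le m<A_{ij}$), $r=i$, $s=j$; $B_e=B_{r(e)s(e)}$. The group bundle $\mathbb{Z}\times E_A^0$ (elements $a_i^k$) acts by $a_i^k\cdot e_{i,j,m}=e_{i,j,\hat m}$, $a_i^k|_{e_{i,j,m}}=a_j^{\hat k}$, $kB_{ij}+m=\hat kA_{ij}+\hat m$, $0\le\hat m<A_{ij}$, extended recursively to finite paths; $G_B$ is the faithful quotient, $(G_B,E_A)$ the KEP-action, $(G_B)_i$ its isotropy group at $i$. $E^0_{A,\infty}=\{i:(G_B)_i\text{ infinite}\}$, $E^0_{A,<\infty}$ its complement. $E_{A_\infty}$: subgraph with vertices $E^0_{A,\infty}$ and edges $\{e:s(e)\in E^0_{A,\infty},B_e\ne0\}$ (adjacency matrix $A_\infty$); $G_{B,\infty}=\{g\in G_B:d(g)\in E^0_{A,\infty}\}=\mathbb{Z}\times E^0_{A,\infty}$ acting on $E_{A_\infty}$ by the restricted KEP formulas (an action-restriction pair, possibly non-faithful). $E_{A_{<\infty}}$: subgraph with vertices $E^0_{A,<\infty}$ and edges $\{e:r(e)\in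 E^0_{A,<\infty},B_e\ne0\}$, adjacency matrix $A_{<\infty}$; $B_{<\infty}$ is $B$ restricted to indices in $E^0_{A,<\infty}$; $(G_{B_{<\infty}},E_{A_{<\infty}})$ is the KEP-action of the Katsura pair $(A_{<\infty},B_{<\infty})$ (equal to the restriction of $G_B$ to $E^0_{A,<\infty}$). Regular (for an action-restriction pair $(G,E)$): for every $g\in G$ there is $K\in\mathbb{N}$ such that $g\cdot\mu=\mu$ and $|\mu|\ge K$ imply $g|_\mu$ is the unit at $s(\mu)$. *)

theory Defs
  imports Main
begin

text \<open>Edges of E_A are triples (i,j,m) standing for e_{i,j,m}, with range r = i and
source s = j.  Finite paths are lists of edges mu = e_1 e_2 ... with s(e_k) = r(e_{k+1});
the empty list is the length-0 path at a vertex (the vertex is carried separately).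
An element a_i^k of the group bundle Z x E^0 is represented by the pair (k, i).\<close>

type_synonym edge = "nat \<times> nat \<times> nat"

definition katsura_pair :: "nat \<Rightarrow> (nat \<Rightarrow> nat \<Rightarrow> nat) \<Rightarrow> (nat \<Rightarrow> nat \<Rightarrow> int) \<Rightarrow> bool" where
  "katsura_pair N A B \<longleftrightarrow> (\<forall>i\<in>{1..N}. \<forall>j\<in>{1..N}. A i j = 0 \<longrightarrow> B i j = 0)"

definition kep_edges :: "nat set \<Rightarrow> (nat \<Rightarrow> nat \<Rightarrow> nat) \<Rightarrow> edge set" where
  "kep_edges V A = {(i, j, m). i \<in> V \<and> j \<in> V \<and> m < A i j}"

definition path_in :: "edge set \<Rightarrow> nat \<Rightarrow> edge list \<Rightarrow> bool" where
  "path_in Ed v mu \<longleftrightarrow> (\<forall>e\<in>set mu. e \<in> Ed) \<and> (mu \<noteq> [] \<longrightarrow> fst (hd mu) = v)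
     \<and> (\<forall>n. Suc n < length mu \<longrightarrow> fst (snd (mu ! n)) = fst (mu ! Suc n))"

text \<open>The KEP formulas: kB_{ij} + m = k' A_{ij} + m', 0 <= m' < A_{ij},
  a_i^k . e_{i,j,m} = e_{i,j,m'} and a_i^k|_{e_{i,j,m}} = a_j^{k'}, extended recursively.\<close>
fun kep_act :: "(nat \<Rightarrow> nat \<Rightarrow> nat) \<Rightarrow> (nat \<Rightarrow> nat \<Rightarrow> int) \<Rightarrow> int \<Rightarrow> edge list \<Rightarrow> edge list" where
  "kep_act A B k [] = []"
| "kep_act A B k ((i, j, m) # mu) =
     (i, j, nat ((k * B i j + int m) mod int (A i j)))
       # kep_act A B ((k * B i j + int m) div int (A i j)) mu"

fun kep_restr :: "(nat \<Rightarrow> nat \<Rightarrow> nat) \<Rightarrow> (nat \<Rightarrow> nat \<Rightarrow> int) \<Rightarrow> int \<Rightarrow> nat \<Rightarrow> edge list \<Rightarrow> int \<times> nat" where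
  "kep_restr A B k v [] = (k, v)"
| "kep_restr A B k v ((i, j, m) # mu) =
     kep_restr A B ((k * B i j + int m) div int (A i j)) j mu"

text \<open>In the faithful quotient G_B, the class of a_j^k is the unit at j iff a_j^k acts
  trivially on all finite paths with range j.\<close>
definition acts_trivially :: "edge set \<Rightarrow> (nat \<Rightarrow> nat \<Rightarrow> nat) \<Rightarrow> (nat \<Rightarrow> nat \<Rightarrow> int) \<Rightarrow> int \<times> nat \<Rightarrow> bool" where
  "acts_trivially Ed A B g \<longleftrightarrow> (\<forall>nu. path_in Ed (snd g) nu \<longrightarrow> kep_act A B (fst g) nu = nu)"

text \<open>Regularity of the KEP-action (G_B, E_A) of a Katsura pair with vertex set V
  (G_B the faithful quotient; every element of G_B is the class of some a_i^k).\<close>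
definition kep_regular :: "nat set \<Rightarrow> (nat \<Rightarrow> nat \<Rightarrow> nat) \<Rightarrow> (nat \<Rightarrow> nat \<Rightarrow> int) \<Rightarrow> bool" where
  "kep_regular V A B \<longleftrightarrow>
     (\<forall>i\<in>V. \<forall>k::int. \<exists>K::nat. \<forall>mu.
        path_in (kep_edges V A) i mu \<and> kep_act A B k mu = mu \<and> length mu \<ge> K
          \<longrightarrow> acts_trivially (kep_edges V A) A B (kep_restr A B k i mu))"

text \<open>Isotropy group (G_B)_i: the classes of the a_i^k, i.e. their actions on paths with range i.\<close>
definition kep_isotropy :: "nat set \<Rightarrow> (nat \<Rightarrow> nat \<Rightarrow> nat) \<Rightarrow> (nat \<Rightarrow> nat \<Rightarrow> int) \<Rightarrow> nat
    \<Rightarrow> (edge list \<Rightarrow> edge list) set" where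
  "kep_isotropy V A B i =
     (\<lambda>k. \<lambda>mu. if path_in (kep_edges V A) i mu then kep_act A B k mu else []) ` UNIV"

definition V_inf :: "nat \<Rightarrow> (nat \<Rightarrow> nat \<Rightarrow> nat) \<Rightarrow> (nat \<Rightarrow> nat \<Rightarrow> int) \<Rightarrow> nat set" where
  "V_inf N A B = {i \<in> {1..N}. infinite (kep_isotropy {1..N} A B i)}"

definition V_fin :: "nat \<Rightarrow> (nat \<Rightarrow> nat \<Rightarrow> nat) \<Rightarrow> (nat \<Rightarrow> nat \<Rightarrow> int) \<Rightarrow> nat set" where
  "V_fin N A B = {1..N} - V_inf N A B"

definition edges_inf :: "nat \<Rightarrow> (nat \<Rightarrow> nat \<Rightarrow> nat) \<Rightarrow> (nat \<Rightarrow> nat \<Rightarrow> int) \<Rightarrow> edge set" where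
  "edges_inf N A B = {e \<in> kep_edges {1..N} A. fst (snd e) \<in> V_inf N A B \<and> B (fst e) (fst (snd e)) \<noteq> 0}"

text \<open>Regularity of the action-restriction pair (G_{B,infty}, E_{A_infty}), where
  G_{B,infty} = Z x E^0_{A,infty} (not necessarily faithful); the unit at j is a_j^0.\<close>
definition inf_regular :: "nat \<Rightarrow> (nat \<Rightarrow> nat \<Rightarrow> nat) \<Rightarrow> (nat \<Rightarrow> nat \<Rightarrow> int) \<Rightarrow> bool" where
  "inf_regular N A B \<longleftrightarrow>
     (\<forall>i\<in>V_inf N A B. \<forall>k::int. \<exists>K::nat. \<forall>mu.
        path_in (edges_inf N A B) i mu \<and> kep_act A B k mu = mu \<and> length mu \<ge> K
          \<longrightarrow> fst (kep_restr A B k i mu) = 0)"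

text \<open>The Katsura pair (A_{<infty}, B_{<infty}) on the index set E^0_{A,<infty}.
  A_{<infty} is the adjacency matrix of E_{A_{<infty}} (edges with B_e /= 0).\<close>
definition A_fin :: "nat \<Rightarrow> (nat \<Rightarrow> nat \<Rightarrow> nat) \<Rightarrow> (nat \<Rightarrow> nat \<Rightarrow> int) \<Rightarrow> nat \<Rightarrow> nat \<Rightarrow> nat" where
  "A_fin N A B i j =
     (if i \<in> V_fin N A B \<and> j \<in> V_fin N A B \<and> B i j \<noteq> 0 then A i j else 0)"

definition B_fin :: "nat \<Rightarrow> (nat \<Rightarrow> nat \<Rightarrow> nat) \<Rightarrow> (nat \<Rightarrow> nat \<Rightarrow> int) \<Rightarrow> nat \<Rightarrow> nat \<Rightarrow> int" where
  "B_fin N A B i j = (if i \<in> V_fin N A B \<and> j \<in> V_fin N A B then B i j else 0)"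

end

theory Submission
  imports Defs
begin


definition okp :: "(nat \<Rightarrow> nat \<Rightarrow> nat) \<Rightarrow> edge list \<Rightarrow> bool" where
  "okp A mu \<longleftrightarrow> (\<forall>e\<in>set mu. snd (snd e) < A (fst e) (fst (snd e)))"

lemma okp_Nil[simp]: "okp A []" by (simp add: okp_def)
lemma okp_Cons[simp]: "okp A ((i,j,m)#mu) \<longleftrightarrow> m < A i j \<and> okp A mu"
  by (auto simp: okp_def)

lemma path_in_Nil[simp]: "path_in E v []" by (simp add: path_in_def)

lemma path_in_Cons: "path_in E v (e#mu) \<longleftrightarrow> e \<in> E \<and> fst e = v \<and> path_in E (fst (snd e)) mu"
proof
  assume H: "path_in E v (e#mu)"
  have a: "\<forall>n. Suc n < length (e#mu) \<longrightarrow> fst (snd ((e#mu) ! n)) = fst ((e#mu) ! Suc n)"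
    using H by (simp add: path_in_def)
  have "\<forall>n. Suc n < length mu \<longrightarrow> fst (snd (mu ! n)) = fst (mu ! Suc n)"
  proof (intro allI impI)
    fix n assume "Suc n < length mu"
    then show "fst (snd (mu ! n)) = fst (mu ! Suc n)" using a[rule_format, of "Suc n"] by simp
  qed
  moreover have "mu \<noteq> [] \<longrightarrow> fst (hd mu) = fst (snd e)"
    using a[rule_format, of 0] by (cases mu) auto
  ultimately show "e \<in> E \<and> fst e = v \<and> path_in E (fst (snd e)) mu"
    using H by (auto simp: path_in_def)
next
  assume H: "e \<in> E \<and> fst e = v \<and> path_in E (fst (snd e)) mu"
  have "\<forall>n. Suc n < length (e#mu) \<longrightarrow> fst (snd ((e#mu) ! n)) = fst ((e#mu) ! Suc n)"
  proof (intro allI impI)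
    fix n assume n: "Suc n < length (e#mu)"
    show "fst (snd ((e#mu) ! n)) = fst ((e#mu) ! Suc n)"
    proof (cases n)
      case 0 then show ?thesis using H n by (cases mu) (auto simp: path_in_def)
    next
      case (Suc n') then show ?thesis using H n by (auto simp: path_in_def)
    qed
  qed
  then show "path_in E v (e#mu)" using H by (auto simp: path_in_def)
qed

lemma path_in_mono: "path_in E v mu \<Longrightarrow> E \<subseteq> E' \<Longrightarrow> path_in E' v mu"
  by (auto simp: path_in_def)

lemma path_okp: "path_in (kep_edges V A) v mu \<Longrightarrow> okp A mu"
  by (auto simp: path_in_def okp_def kep_edges_def)

lemma act_length[simp]: "length (kep_act A B k mu) = length mu"
  by (induction A B k mu rule: kep_act.induct) auto

lemma act_zero: "okp A mu \<Longrightarrow> kep_act A B 0 mu = mu"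
  by (induction A B "0::int" mu rule: kep_act.induct) auto

lemma restr_zero: "okp A mu \<Longrightarrow> fst (kep_restr A B 0 v mu) = 0"
proof (induction mu arbitrary: v)
  case (Cons e mu) then show ?case by (cases e) auto
qed simp

lemma restr_snd: "snd (kep_restr A B k v mu) = (if mu = [] then v else fst (snd (last mu)))"
  by (induction A B k v mu rule: kep_restr.induct) auto

lemma arith1:
  fixes a b k l x :: int
  assumes "a > 0"
  shows "((k+l)*b + x) mod a = (k*b + (l*b+x) mod a) mod a"
    and "((k+l)*b + x) div a = (k*b + (l*b+x) mod a) div a + (l*b+x) div a"
proof -
  have e: "(k+l)*b + x = (k*b + (l*b+x) mod a) + ((l*b+x) div a) * a"
    by (simp add: algebra_simps)
  show "((k+l)*b + x) mod a = (k*b + (l*b+x) mod a) mod a"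
    by (metis e mod_mult_self1)
  show "((k+l)*b + x) div a = (k*b + (l*b+x) mod a) div a + (l*b+x) div a"
    using assms by (metis e div_mult_self1 add.commute less_irrefl)
qed

lemma act_add: "okp A mu \<Longrightarrow> kep_act A B (k+l) mu = kep_act A B k (kep_act A B l mu)"
proof (induction mu arbitrary: k l)
  case Nil then show ?case by simp
next
  case (Cons e mu)
  obtain i j m where e: "e = (i,j,m)" by (cases e)
  have A: "int (A i j) > 0" using Cons.prems e by auto
  have nn: "int (nat ((l * B i j + int m) mod int (A i j))) = (l * B i j + int m) mod int (A i j)"
    using A by simp
  show ?case using Cons e arith1[OF A, of k l "B i j" "int m"] nn by simp
qed

lemma restr_add: "okp A mu \<Longrightarrow> fst (kep_restr A B (k+l) v mu)
   = fst (kep_restr A B k v (kep_act A B l mu)) + fst (kep_restr A B l v mu)"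
proof (induction mu arbitrary: k l v)
  case Nil then show ?case by simp
next
  case (Cons e mu)
  obtain i j m where e: "e = (i,j,m)" by (cases e)
  have A: "int (A i j) > 0" using Cons.prems e by auto
  have nn: "int (nat ((l * B i j + int m) mod int (A i j))) = (l * B i j + int m) mod int (A i j)"
    using A by simp
  show ?case using Cons e arith1[OF A, of k l "B i j" "int m"] nn by simp
qed

lemma restr_Bzero: "okp A mu \<Longrightarrow> \<exists>e\<in>set mu. B (fst e) (fst (snd e)) = 0 \<Longrightarrow> fst (kep_restr A B k v mu) = 0"
proof (induction mu arbitrary: k v)
  case Nil then show ?case by simp
next
  case (Cons e mu)
  obtain i j m where e: "e = (i,j,m)" by (cases e)
  show ?case
  proof (cases "B i j = 0")
    case True then show ?thesis using Cons e restr_zero[of A mu B j] by simp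
  next
    case False then show ?thesis using Cons e by auto
  qed
qed

lemma T0: "fst g = 0 \<Longrightarrow> acts_trivially (kep_edges V A) A B g"
  by (auto simp: acts_trivially_def act_zero dest: path_okp)

lemma Tadd: "acts_trivially (kep_edges V A) A B (k, j) \<Longrightarrow> acts_trivially (kep_edges V A) A B (l, j)
   \<Longrightarrow> acts_trivially (kep_edges V A) A B (k + l, j)"
  by (auto simp: acts_trivially_def act_add[OF path_okp])

lemma Tneg: "acts_trivially (kep_edges V A) A B (k, j) \<Longrightarrow> acts_trivially (kep_edges V A) A B (-k, j)"
  unfolding acts_trivially_def
proof (intro allI impI)
  fix nu assume H: "\<forall>nu. path_in (kep_edges V A) (snd (k, j)) nu \<longrightarrow> kep_act A B (fst (k, j)) nu = nu"
    and p: "path_in (kep_edges V A) (snd (- k, j)) nu"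
  have ok: "okp A nu" using p path_okp by blast
  have "kep_act A B (-k) nu = kep_act A B (-k) (kep_act A B k nu)" using H p by simp
  also have "\<dots> = kep_act A B (-k + k) nu" using act_add[OF ok, of B "-k" k] by simp
  also have "\<dots> = nu" using act_zero[OF ok] by simp
  finally show "kep_act A B (fst (- k, j)) nu = nu" by simp
qed

lemma Tmult_nat: "acts_trivially (kep_edges V A) A B (d, j) \<Longrightarrow> acts_trivially (kep_edges V A) A B (d * int n, j)"
proof (induction n)
  case 0 then show ?case by (simp add: T0)
next
  case (Suc n)
  have "d * int (Suc n) = d + d * int n" by (simp add: algebra_simps)
  then show ?case using Suc Tadd by metis
qed

lemma Tmult: assumes "acts_trivially (kep_edges V A) A B (d, j)" shows "acts_trivially (kep_edges V A) A B (d * t, j)"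
proof (cases "t \<ge> 0")
  case True
  then obtain n where "t = int n" by (metis nonneg_eq_int)
  then show ?thesis using Tmult_nat assms by simp
next
  case False
  then obtain n where "t = - int n" by (metis le_cases neg_0_le_iff_le nonneg_eq_int minus_minus)
  then show ?thesis using Tmult_nat[OF assms, of n] Tneg by fastforce
qed

lemma Tstep: "acts_trivially (kep_edges V A) A B (k, v) \<Longrightarrow> (v,b,m) \<in> kep_edges V A
  \<Longrightarrow> acts_trivially (kep_edges V A) A B ((k * B v b + int m) div int (A v b), b)"
  unfolding acts_trivially_def
proof (intro allI impI)
  fix nu assume H: "\<forall>nu. path_in (kep_edges V A) (snd (k, v)) nu \<longrightarrow> kep_act A B (fst (k, v)) nu = nu"
    and e: "(v,b,m) \<in> kep_edges V A"
    and p: "path_in (kep_edges V A) (snd ((k * B v b + int m) div int (A v b), b)) nu"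
  have "path_in (kep_edges V A) v ((v,b,m)#nu)" using e p by (simp add: path_in_Cons)
  then have "kep_act A B k ((v,b,m)#nu) = (v,b,m)#nu" using H[rule_format, of "(v,b,m)#nu"] by (simp del: kep_act.simps)
  then show "kep_act A B (fst ((k * B v b + int m) div int (A v b), b)) nu = nu" by simp
qed

lemma Trestr: "acts_trivially (kep_edges V A) A B (k, v) \<Longrightarrow> path_in (kep_edges V A) v mu
  \<Longrightarrow> acts_trivially (kep_edges V A) A B (kep_restr A B k v mu)"
proof (induction mu arbitrary: k v)
  case Nil then show ?case by simp
next
  case (Cons e mu)
  obtain i j m where e: "e = (i,j,m)" by (cases e)
  have "i = v" "(v,j,m) \<in> kep_edges V A" "path_in (kep_edges V A) j mu"
    using Cons.prems(2) e by (auto simp: path_in_Cons)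
  then show ?case using Cons.IH Tstep[OF Cons.prems(1)] e by simp
qed



lemma Vinf_sub: "V_inf N A B \<subseteq> {1..N}" by (auto simp: V_inf_def)
lemma Vfin_sub: "V_fin N A B \<subseteq> {1..N}" by (auto simp: V_fin_def)

lemma Vinf0:
  assumes j: "j \<in> V_inf N A B" and t: "acts_trivially (kep_edges {1..N} A) A B (d, j)"
  shows "d = 0"
proof (rule ccontr)
  assume d: "d \<noteq> 0"
  define f where "f = (\<lambda>k. \<lambda>mu. if path_in (kep_edges {1..N} A) j mu then kep_act A B k mu else [])"
  have fk: "f k = f (k mod d)" for k
  proof
    fix mu
    show "f k mu = f (k mod d) mu"
    proof (cases "path_in (kep_edges {1..N} A) j mu")
      case True
      have ok: "okp A mu" using True path_okp by blast
      have tt: "kep_act A B (d * (k div d)) mu = mu"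
        using Tmult[OF t, of "k div d"] True by (simp add: acts_trivially_def)
      have kk: "k = k mod d + d * (k div d)" by simp
      have "kep_act A B (k mod d + d * (k div d)) mu = kep_act A B (k mod d) (kep_act A B (d * (k div d)) mu)"
        by (rule act_add[OF ok])
      then have "kep_act A B k mu = kep_act A B (k mod d) mu" using tt kk by metis
      then show ?thesis using True by (simp add: f_def)
    qed (simp add: f_def)
  qed
  have "k mod d \<in> {-\<bar>d\<bar>..\<bar>d\<bar>}" for k
  proof (cases "d > 0")
    case True
    have "0 \<le> k mod d" "k mod d < d" "\<bar>d\<bar> = d" using True by simp_all
    then show ?thesis unfolding atLeastAtMost_iff by linarith
  next
    case False then have "d < 0" using d by simp
    then have "k mod d \<le> 0" "d < k mod d" "\<bar>d\<bar> = -d" by simp_all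
    then show ?thesis unfolding atLeastAtMost_iff by linarith
  qed
  then have "f ` UNIV \<subseteq> f ` {-\<bar>d\<bar>..\<bar>d\<bar>}" using fk by (metis image_eqI image_subsetI)
  then have "finite (f ` UNIV)" by (meson finite_atLeastAtMost_int finite_imageI finite_subset)
  moreover have "infinite (kep_isotropy {1..N} A B j)" using j by (simp add: V_inf_def)
  ultimately show False by (simp add: kep_isotropy_def f_def)
qed

lemma Vfin_d:
  assumes j: "j \<in> V_fin N A B"
  shows "\<exists>d>0. acts_trivially (kep_edges {1..N} A) A B (d, j)"
proof -
  define f where "f = (\<lambda>k. \<lambda>mu. if path_in (kep_edges {1..N} A) j mu then kep_act A B k mu else [])"
  have "finite (f ` UNIV)" using j by (simp add: V_fin_def V_inf_def kep_isotropy_def f_def)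
  then have "\<not> inj f" using finite_imageD infinite_UNIV_int by blast
  then obtain k1 k2 where k: "k1 \<noteq> k2" "f k1 = f k2" unfolding inj_def by blast
  have t: "acts_trivially (kep_edges {1..N} A) A B (k1 - k2, j)"
    unfolding acts_trivially_def
  proof (intro allI impI)
    fix nu assume p: "path_in (kep_edges {1..N} A) (snd (k1 - k2, j)) nu"
    have ok: "okp A nu" using p path_okp by fastforce
    have e: "kep_act A B k1 nu = kep_act A B k2 nu" using fun_cong[OF k(2), of nu] p by (simp add: f_def)
    have "kep_act A B (k1 - k2) nu = kep_act A B (-k2 + k1) nu" by simp
    also have "\<dots> = kep_act A B (-k2) (kep_act A B k2 nu)" using act_add[OF ok, of B "-k2" k1] e by simp
    also have "\<dots> = kep_act A B (-k2 + k2) nu" using act_add[OF ok, of B "-k2" k2] by simp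
    also have "\<dots> = nu" using act_zero[OF ok] by simp
    finally show "kep_act A B (fst (k1 - k2, j)) nu = nu" by simp
  qed
  show ?thesis
  proof (cases "k1 - k2 > 0")
    case True then show ?thesis using t by blast
  next
    case False then have "-(k1-k2) > 0" using k(1) by simp
    then show ?thesis using Tneg[OF t] by blast
  qed
qed

lemma stay:
  assumes a: "a \<in> V_fin N A B" and e: "(a,b,m) \<in> kep_edges {1..N} A" and B: "B a b \<noteq> 0"
  shows "b \<in> V_fin N A B"
proof -
  obtain d where d: "d > 0" "acts_trivially (kep_edges {1..N} A) A B (d, a)" using Vfin_d[OF a] by blast
  have "path_in (kep_edges {1..N} A) a [(a,b,m)]" using e by (simp add: path_in_Cons)
  then have "kep_act A B d [(a,b,m)] = [(a,b,m)]" using d(2) by (simp add: acts_trivially_def del: kep_act.simps)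
  then have fx: "nat ((d * B a b + int m) mod int (A a b)) = m" by simp
  have Apos: "int (A a b) > 0" using e by (simp add: kep_edges_def)
  have "(d * B a b + int m) mod int (A a b) \<ge> 0" using Apos by simp
  then have fx2: "(d * B a b + int m) mod int (A a b) = int m" using fx by linarith
  define q where "q = (d * B a b + int m) div int (A a b)"
  have "d * B a b + int m = q * int (A a b) + int m" using fx2 q_def by (metis div_mult_mod_eq)
  then have "d * B a b = q * int (A a b)" by simp
  then have q0: "q \<noteq> 0" using d(1) B by auto
  have "acts_trivially (kep_edges {1..N} A) A B (q, b)" using Tstep[OF d(2) e] q_def by simp
  then have "b \<notin> V_inf N A B" using Vinf0 q0 by blast
  moreover have "b \<in> {1..N}" using e by (simp add: kep_edges_def)
  ultimately show ?thesis by (simp add: V_fin_def)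
qed

lemma Ef_mem: "(a,b,m) \<in> kep_edges (V_fin N A B) (A_fin N A B) \<longleftrightarrow>
   a \<in> V_fin N A B \<and> b \<in> V_fin N A B \<and> B a b \<noteq> 0 \<and> m < A a b"
  by (auto simp: kep_edges_def A_fin_def)

lemma Ef_sub: "kep_edges (V_fin N A B) (A_fin N A B) \<subseteq> kep_edges {1..N} A"
  using Vfin_sub by (fastforce simp: kep_edges_def A_fin_def split: if_splits)

lemma agree_act: "(\<forall>e\<in>set mu. A' (fst e) (fst (snd e)) = A (fst e) (fst (snd e)) \<and> B' (fst e) (fst (snd e)) = B (fst e) (fst (snd e)))
  \<Longrightarrow> kep_act A' B' k mu = kep_act A B k mu"
  by (induction A B k mu rule: kep_act.induct) auto

lemma agree_restr: "(\<forall>e\<in>set mu. A' (fst e) (fst (snd e)) = A (fst e) (fst (snd e)) \<and> B' (fst e) (fst (snd e)) = B (fst e) (fst (snd e)))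
  \<Longrightarrow> kep_restr A' B' k v mu = kep_restr A B k v mu"
  by (induction A B k v mu rule: kep_restr.induct) auto

lemma Ef_agree: "path_in (kep_edges (V_fin N A B) (A_fin N A B)) v mu \<Longrightarrow>
  (\<forall>e\<in>set mu. A_fin N A B (fst e) (fst (snd e)) = A (fst e) (fst (snd e)) \<and> B_fin N A B (fst e) (fst (snd e)) = B (fst e) (fst (snd e)))"
  by (auto simp: path_in_def kep_edges_def A_fin_def B_fin_def split: if_splits)

lemma toEf: "path_in (kep_edges {1..N} A) j mu \<Longrightarrow> j \<in> V_fin N A B \<Longrightarrow> \<forall>e\<in>set mu. B (fst e) (fst (snd e)) \<noteq> 0
  \<Longrightarrow> path_in (kep_edges (V_fin N A B) (A_fin N A B)) j mu"
proof (induction mu arbitrary: j)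
  case Nil then show ?case by simp
next
  case (Cons e mu)
  obtain a b m where e: "e = (a,b,m)" by (cases e)
  have h: "a = j" "(j,b,m) \<in> kep_edges {1..N} A" "path_in (kep_edges {1..N} A) b mu"
    using Cons.prems(1) e by (auto simp: path_in_Cons)
  have Bn: "B j b \<noteq> 0" using Cons.prems(3) e h by auto
  have b: "b \<in> V_fin N A B" using stay[OF Cons.prems(2) h(2) Bn] .
  have "m < A j b" using h(2) by (simp add: kep_edges_def)
  then have "(j,b,m) \<in> kep_edges (V_fin N A B) (A_fin N A B)" using Ef_mem Cons.prems(2) b Bn by blast
  then show ?case using Cons.IH[OF h(3) b] Cons.prems(3) e h(1) by (simp add: path_in_Cons)
qed

lemma TF:
  assumes "j \<in> V_fin N A B"
    and "\<forall>nu. path_in (kep_edges (V_fin N A B) (A_fin N A B)) j nu \<longrightarrow> kep_act (A_fin N A B) (B_fin N A B) k nu = nu"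
    and "path_in (kep_edges {1..N} A) j nu"
  shows "kep_act A B k nu = nu"
  using assms
proof (induction nu arbitrary: j k)
  case Nil then show ?case by simp
next
  case (Cons e mu)
  obtain a b m where e: "e = (a,b,m)" by (cases e)
  have h: "a = j" "(j,b,m) \<in> kep_edges {1..N} A" "path_in (kep_edges {1..N} A) b mu"
    using Cons.prems(3) e by (auto simp: path_in_Cons)
  have mA: "m < A j b" using h(2) by (simp add: kep_edges_def)
  have ok: "okp A mu" using h(3) path_okp by blast
  show ?case
  proof (cases "B j b = 0")
    case True then show ?thesis using e h mA act_zero[OF ok] by simp
  next
    case False
    have b: "b \<in> V_fin N A B" using stay[OF Cons.prems(1) h(2) False] .
    have eF: "(j,b,m) \<in> kep_edges (V_fin N A B) (A_fin N A B)" using Ef_mem Cons.prems(1) b False mA by blast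
    have AB: "A_fin N A B j b = A j b" "B_fin N A B j b = B j b"
      using Cons.prems(1) b False by (auto simp: A_fin_def B_fin_def)
    define q where "q = (k * B j b + int m) div int (A j b)"
    have "path_in (kep_edges (V_fin N A B) (A_fin N A B)) j [(j,b,m)]" using eF by (simp add: path_in_Cons)
    then have "kep_act (A_fin N A B) (B_fin N A B) k [(j,b,m)] = [(j,b,m)]" using Cons.prems(2) by blast
    then have fx: "nat ((k * B j b + int m) mod int (A j b)) = m" using AB by simp
    have hyp: "\<forall>nu. path_in (kep_edges (V_fin N A B) (A_fin N A B)) b nu \<longrightarrow> kep_act (A_fin N A B) (B_fin N A B) q nu = nu"
    proof (intro allI impI)
      fix nu assume p: "path_in (kep_edges (V_fin N A B) (A_fin N A B)) b nu"
      then have "path_in (kep_edges (V_fin N A B) (A_fin N A B)) j ((j,b,m)#nu)" using eF by (simp add: path_in_Cons)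
      then have "kep_act (A_fin N A B) (B_fin N A B) k ((j,b,m)#nu) = (j,b,m)#nu" using Cons.prems(2) by blast
      then show "kep_act (A_fin N A B) (B_fin N A B) q nu = nu" using AB q_def by simp
    qed
    have "kep_act A B q mu = mu" using Cons.IH[OF b hyp h(3)] .
    then show ?thesis using e h(1) fx q_def by simp
  qed
qed

lemma restr_snd_in: "path_in Ed v mu \<Longrightarrow> v \<in> W \<Longrightarrow> (\<forall>e\<in>Ed. fst (snd e) \<in> W) \<Longrightarrow> snd (kep_restr A B k v mu) \<in> W"
  by (auto simp: restr_snd path_in_def)



theorem proposition3p5:
  fixes N :: nat and A :: "nat \<Rightarrow> nat \<Rightarrow> nat" and B :: "nat \<Rightarrow> nat \<Rightarrow> int"
  assumes "katsura_pair N A B"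
  shows "kep_regular {1..N} A B \<longleftrightarrow>
           (inf_regular N A B \<and> kep_regular (V_fin N A B) (A_fin N A B) (B_fin N A B))"
proof
  assume R: "kep_regular {1..N} A B"
  have I: "inf_regular N A B"
    unfolding inf_regular_def
  proof (intro ballI allI)
    fix i k assume i: "i \<in> V_inf N A B"
    then have "i \<in> {1..N}" using Vinf_sub by blast
    then obtain K where K: "\<forall>mu. path_in (kep_edges {1..N} A) i mu \<and> kep_act A B k mu = mu \<and> length mu \<ge> K
        \<longrightarrow> acts_trivially (kep_edges {1..N} A) A B (kep_restr A B k i mu)"
      using R unfolding kep_regular_def by blast
    show "\<exists>K. \<forall>mu. path_in (edges_inf N A B) i mu \<and> kep_act A B k mu = mu \<and> K \<le> length mu
        \<longrightarrow> fst (kep_restr A B k i mu) = 0"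
    proof (intro exI allI impI)
      fix mu assume H: "path_in (edges_inf N A B) i mu \<and> kep_act A B k mu = mu \<and> K \<le> length mu"
      have sub: "edges_inf N A B \<subseteq> kep_edges {1..N} A" by (auto simp: edges_inf_def)
      have t: "acts_trivially (kep_edges {1..N} A) A B (kep_restr A B k i mu)"
        using K H path_in_mono[OF _ sub] by blast
      have s: "snd (kep_restr A B k i mu) \<in> V_inf N A B"
      proof (rule restr_snd_in)
        show "path_in (edges_inf N A B) i mu" using H by blast
        show "i \<in> V_inf N A B" by (rule i)
        show "\<forall>e\<in>edges_inf N A B. fst (snd e) \<in> V_inf N A B" by (simp add: edges_inf_def)
      qed
      show "fst (kep_restr A B k i mu) = 0" using Vinf0[OF s, of "fst (kep_restr A B k i mu)"] t by simp
    qed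
  qed
  have F: "kep_regular (V_fin N A B) (A_fin N A B) (B_fin N A B)"
    unfolding kep_regular_def
  proof (intro ballI allI)
    fix i k assume i: "i \<in> V_fin N A B"
    then have "i \<in> {1..N}" using Vfin_sub by blast
    then obtain K where K: "\<forall>mu. path_in (kep_edges {1..N} A) i mu \<and> kep_act A B k mu = mu \<and> length mu \<ge> K
        \<longrightarrow> acts_trivially (kep_edges {1..N} A) A B (kep_restr A B k i mu)"
      using R unfolding kep_regular_def by blast
    show "\<exists>K. \<forall>mu. path_in (kep_edges (V_fin N A B) (A_fin N A B)) i mu \<and> kep_act (A_fin N A B) (B_fin N A B) k mu = mu \<and> K \<le> length mu
        \<longrightarrow> acts_trivially (kep_edges (V_fin N A B) (A_fin N A B)) (A_fin N A B) (B_fin N A B) (kep_restr (A_fin N A B) (B_fin N A B) k i mu)"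
    proof (intro exI allI impI)
      fix mu assume H: "path_in (kep_edges (V_fin N A B) (A_fin N A B)) i mu \<and> kep_act (A_fin N A B) (B_fin N A B) k mu = mu \<and> K \<le> length mu"
      have ag: "\<forall>e\<in>set mu. A_fin N A B (fst e) (fst (snd e)) = A (fst e) (fst (snd e)) \<and> B_fin N A B (fst e) (fst (snd e)) = B (fst e) (fst (snd e))"
        using Ef_agree H by blast
      have act: "kep_act (A_fin N A B) (B_fin N A B) k mu = kep_act A B k mu" using agree_act[OF ag] .
      have rs: "kep_restr (A_fin N A B) (B_fin N A B) k i mu = kep_restr A B k i mu" using agree_restr[OF ag] .
      have p: "path_in (kep_edges {1..N} A) i mu" using H path_in_mono Ef_sub by blast
      have "kep_act A B k mu = mu" using H act by simp
      then have t: "acts_trivially (kep_edges {1..N} A) A B (kep_restr A B k i mu)" using K H p by blast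
      show "acts_trivially (kep_edges (V_fin N A B) (A_fin N A B)) (A_fin N A B) (B_fin N A B) (kep_restr (A_fin N A B) (B_fin N A B) k i mu)"
        unfolding acts_trivially_def rs
      proof (intro allI impI)
        fix nu assume pn: "path_in (kep_edges (V_fin N A B) (A_fin N A B)) (snd (kep_restr A B k i mu)) nu"
        note ag2 = Ef_agree[OF pn]
        have "path_in (kep_edges {1..N} A) (snd (kep_restr A B k i mu)) nu" using pn path_in_mono Ef_sub by blast
        then show "kep_act (A_fin N A B) (B_fin N A B) (fst (kep_restr A B k i mu)) nu = nu"
          using t agree_act[OF ag2] unfolding acts_trivially_def by simp
      qed
    qed
  qed
  show "inf_regular N A B \<and> kep_regular (V_fin N A B) (A_fin N A B) (B_fin N A B)" using I F by blast
next
  assume "inf_regular N A B \<and> kep_regular (V_fin N A B) (A_fin N A B) (B_fin N A B)"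
  then have I: "inf_regular N A B" and F: "kep_regular (V_fin N A B) (A_fin N A B) (B_fin N A B)" by auto
  define Kf where "Kf j r = (SOME K. \<forall>mu. path_in (kep_edges (V_fin N A B) (A_fin N A B)) j mu \<and> kep_act (A_fin N A B) (B_fin N A B) r mu = mu \<and> K \<le> length mu
        \<longrightarrow> acts_trivially (kep_edges (V_fin N A B) (A_fin N A B)) (A_fin N A B) (B_fin N A B) (kep_restr (A_fin N A B) (B_fin N A B) r j mu))" for j r
  have Kf: "\<forall>mu. path_in (kep_edges (V_fin N A B) (A_fin N A B)) j mu \<and> kep_act (A_fin N A B) (B_fin N A B) r mu = mu \<and> Kf j r \<le> length mu
        \<longrightarrow> acts_trivially (kep_edges (V_fin N A B) (A_fin N A B)) (A_fin N A B) (B_fin N A B) (kep_restr (A_fin N A B) (B_fin N A B) r j mu)"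
    if "j \<in> V_fin N A B" for j r
    unfolding Kf_def by (rule someI_ex) (use F that in \<open>auto simp: kep_regular_def\<close>)
  define D where "D j = (SOME d. d > 0 \<and> acts_trivially (kep_edges {1..N} A) A B (d, j))" for j
  have D: "D j > 0 \<and> acts_trivially (kep_edges {1..N} A) A B (D j, j)" if "j \<in> V_fin N A B" for j
    unfolding D_def by (rule someI_ex) (use Vfin_d[OF that] in blast)
  define Km where "Km = (\<Sum>j\<in>V_fin N A B. \<Sum>r\<in>{0..<D j}. Kf j r)"
  have finV: "finite (V_fin N A B)" by (rule finite_subset[OF Vfin_sub]) simp
  have Kmb: "Kf j r \<le> Km" if "j \<in> V_fin N A B" "0 \<le> r" "r < D j" for j r
  proof -
    have "Kf j r \<le> (\<Sum>r\<in>{0..<D j}. Kf j r)" by (rule member_le_sum) (use that in auto)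
    also have "\<dots> \<le> Km" unfolding Km_def by (rule member_le_sum[where f = "\<lambda>j. \<Sum>r\<in>{0..<D j}. Kf j r"]) (use that finV in auto)
    finally show ?thesis .
  qed
  have Gfin: "acts_trivially (kep_edges {1..N} A) A B (kep_restr A B k j mu)"
    if j: "j \<in> V_fin N A B" and p: "path_in (kep_edges {1..N} A) j mu" and fx: "kep_act A B k mu = mu"
      and len: "Km \<le> length mu" for j k mu
  proof -
    have ok: "okp A mu" using p path_okp by blast
    show ?thesis
    proof (cases "\<exists>e\<in>set mu. B (fst e) (fst (snd e)) = 0")
      case True then show ?thesis using restr_Bzero[OF ok True] T0 by blast
    next
      case False
      have pF: "path_in (kep_edges (V_fin N A B) (A_fin N A B)) j mu" using toEf[OF p j] False by blast
      have d: "D j > 0" "acts_trivially (kep_edges {1..N} A) A B (D j, j)" using D[OF j] by auto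
      define r where "r = k mod D j"
      define t where "t = k div D j"
      have kk: "k = r + D j * t" unfolding r_def t_def by simp
      have tt: "acts_trivially (kep_edges {1..N} A) A B (D j * t, j)" using Tmult[OF d(2)] by blast
      have fxt: "kep_act A B (D j * t) mu = mu" using tt p unfolding acts_trivially_def by simp
      have "kep_act A B (r + D j * t) mu = kep_act A B r (kep_act A B (D j * t) mu)" by (rule act_add[OF ok])
      then have fxr: "kep_act A B r mu = mu" using fx fxt kk by simp
      have rr: "0 \<le> r" "r < D j" unfolding r_def using d(1) by simp_all
      have ag: "\<forall>e\<in>set mu. A_fin N A B (fst e) (fst (snd e)) = A (fst e) (fst (snd e)) \<and> B_fin N A B (fst e) (fst (snd e)) = B (fst e) (fst (snd e))"
        using Ef_agree pF by blast
      have "acts_trivially (kep_edges (V_fin N A B) (A_fin N A B)) (A_fin N A B) (B_fin N A B) (kep_restr (A_fin N A B) (B_fin N A B) r j mu)"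
        using Kf[OF j, of r] pF fxr agree_act[OF ag] len Kmb[OF j rr] by simp
      then have tF: "acts_trivially (kep_edges (V_fin N A B) (A_fin N A B)) (A_fin N A B) (B_fin N A B) (kep_restr A B r j mu)"
        using agree_restr[OF ag] by simp
      have w: "snd (kep_restr A B r j mu) \<in> V_fin N A B"
      proof (rule restr_snd_in[OF pF j])
        show "\<forall>e\<in>kep_edges (V_fin N A B) (A_fin N A B). fst (snd e) \<in> V_fin N A B"
          unfolding kep_edges_def by auto
      qed
      have t1: "acts_trivially (kep_edges {1..N} A) A B (fst (kep_restr A B r j mu), snd (kep_restr A B r j mu))"
        unfolding acts_trivially_def
      proof (intro allI impI)
        fix nu assume pn: "path_in (kep_edges {1..N} A) (snd (fst (kep_restr A B r j mu), snd (kep_restr A B r j mu))) nu"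
        show "kep_act A B (fst (fst (kep_restr A B r j mu), snd (kep_restr A B r j mu))) nu = nu"
          using TF[OF w _ ] tF pn unfolding acts_trivially_def by simp
      qed
      have t2: "acts_trivially (kep_edges {1..N} A) A B (kep_restr A B (D j * t) j mu)" using Trestr[OF tt p] .
      have sn: "snd (kep_restr A B (D j * t) j mu) = snd (kep_restr A B r j mu)"
        "snd (kep_restr A B k j mu) = snd (kep_restr A B r j mu)" by (simp_all add: restr_snd)
      have t2': "acts_trivially (kep_edges {1..N} A) A B (fst (kep_restr A B (D j * t) j mu), snd (kep_restr A B r j mu))"
        using t2 sn by (metis prod.collapse)
      have "fst (kep_restr A B k j mu) = fst (kep_restr A B r j (kep_act A B (D j * t) mu)) + fst (kep_restr A B (D j * t) j mu)"
        using restr_add[OF ok, of B r "D j * t" j] kk by simp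
      then have "fst (kep_restr A B k j mu) = fst (kep_restr A B r j mu) + fst (kep_restr A B (D j * t) j mu)"
        using fxt by simp
      then have "kep_restr A B k j mu = (fst (kep_restr A B r j mu) + fst (kep_restr A B (D j * t) j mu), snd (kep_restr A B r j mu))"
        using sn by (metis prod.collapse)
      then show ?thesis using Tadd[OF t1 t2'] by simp
    qed
  qed
  have Ginf: "\<forall>n j k. j \<in> V_inf N A B \<longrightarrow>
      (\<forall>mu'. path_in (edges_inf N A B) j mu' \<and> kep_act A B k mu' = mu' \<and> n \<le> length mu' \<longrightarrow> fst (kep_restr A B k j mu') = 0)
      \<longrightarrow> path_in (kep_edges {1..N} A) j mu \<longrightarrow> kep_act A B k mu = mu \<longrightarrow> n + Km + 1 \<le> length mu
      \<longrightarrow> acts_trivially (kep_edges {1..N} A) A B (kep_restr A B k j mu)" for mu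
  proof (induction mu)
    case Nil then show ?case by simp
  next
    case (Cons e mu)
    show ?case
    proof (intro allI impI)
      fix n j k
      assume j: "j \<in> V_inf N A B"
        and hyp: "\<forall>mu'. path_in (edges_inf N A B) j mu' \<and> kep_act A B k mu' = mu' \<and> n \<le> length mu' \<longrightarrow> fst (kep_restr A B k j mu') = 0"
        and p: "path_in (kep_edges {1..N} A) j (e # mu)" and fx: "kep_act A B k (e # mu) = e # mu"
        and len: "n + Km + 1 \<le> length (e # mu)"
      obtain a b m where e: "e = (a,b,m)" by (cases e)
      have h: "a = j" "(j,b,m) \<in> kep_edges {1..N} A" "path_in (kep_edges {1..N} A) b mu"
        using p e by (auto simp: path_in_Cons)
      define q where "q = (k * B j b + int m) div int (A j b)"
      have fx1: "nat ((k * B j b + int m) mod int (A j b)) = m" and fx2: "kep_act A B q mu = mu"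
        using fx e h(1) q_def by simp_all
      have rs: "kep_restr A B k j (e # mu) = kep_restr A B q b mu" using e h(1) q_def by simp
      have okp: "okp A (e # mu)" using p path_okp by blast
      have bN: "b \<in> {1..N}" using h(2) by (simp add: kep_edges_def)
      show "acts_trivially (kep_edges {1..N} A) A B (kep_restr A B k j (e # mu))"
      proof (cases "B j b = 0")
        case True
        then have "\<exists>e'\<in>set (e # mu). B (fst e') (fst (snd e')) = 0" using e h(1) by auto
        then have "fst (kep_restr A B k j (e # mu)) = 0" by (rule restr_Bzero[OF okp])
        then show ?thesis using T0 by blast
      next
        case Bn: False
        show ?thesis
        proof (cases "b \<in> V_fin N A B")
          case True
          then show ?thesis using Gfin[OF True h(3) fx2] len rs by simp
        next
          case False
          then have b: "b \<in> V_inf N A B" using bN by (simp add: V_fin_def)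
          have eI: "(j,b,m) \<in> edges_inf N A B" using h(2) b Bn by (simp add: edges_inf_def)
          show ?thesis
          proof (cases n)
            case 0
            then have "k = 0" using hyp[rule_format, of "[]"] by simp
            then have "fst (kep_restr A B k j (e # mu)) = 0" using restr_zero[OF okp] by simp
            then show ?thesis using T0 by blast
          next
            case (Suc n')
            have hyp': "\<forall>mu'. path_in (edges_inf N A B) b mu' \<and> kep_act A B q mu' = mu' \<and> n' \<le> length mu' \<longrightarrow> fst (kep_restr A B q b mu') = 0"
            proof (intro allI impI)
              fix mu' assume H: "path_in (edges_inf N A B) b mu' \<and> kep_act A B q mu' = mu' \<and> n' \<le> length mu'"
              have "path_in (edges_inf N A B) j ((j,b,m) # mu')" using H eI by (simp add: path_in_Cons)
              moreover have "kep_act A B k ((j,b,m) # mu') = (j,b,m) # mu'" using H fx1 q_def by simp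
              moreover have "n \<le> length ((j,b,m) # mu')" using H Suc by simp
              ultimately have "fst (kep_restr A B k j ((j,b,m) # mu')) = 0" using hyp by blast
              then show "fst (kep_restr A B q b mu') = 0" using q_def by simp
            qed
            have "acts_trivially (kep_edges {1..N} A) A B (kep_restr A B q b mu)"
            proof -
              have "n' + Km + 1 \<le> length mu" using len Suc e by simp
              then show ?thesis using Cons.IH[THEN spec[of _ n'], THEN spec[of _ b], THEN spec[of _ q],
                THEN mp, OF b, THEN mp, OF hyp', THEN mp, OF h(3), THEN mp, OF fx2, THEN mp] by blast
            qed
            then show ?thesis using rs by simp
          qed
        qed
      qed
    qed
  qed
  show "kep_regular {1..N} A B"
    unfolding kep_regular_def
  proof (intro ballI allI)
    fix i k assume i: "i \<in> {1..N}"
    show "\<exists>K. \<forall>mu. path_in (kep_edges {1..N} A) i mu \<and> kep_act A B k mu = mu \<and> K \<le> length mu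
        \<longrightarrow> acts_trivially (kep_edges {1..N} A) A B (kep_restr A B k i mu)"
    proof (cases "i \<in> V_fin N A B")
      case True
      show ?thesis
      proof (intro exI allI impI)
        fix mu assume H: "path_in (kep_edges {1..N} A) i mu \<and> kep_act A B k mu = mu \<and> Km \<le> length mu"
        show "acts_trivially (kep_edges {1..N} A) A B (kep_restr A B k i mu)"
          using Gfin[OF True] H by blast
      qed
    next
      case False
      then have iI: "i \<in> V_inf N A B" using i by (simp add: V_fin_def)
      then obtain K where K: "\<forall>mu. path_in (edges_inf N A B) i mu \<and> kep_act A B k mu = mu \<and> K \<le> length mu
          \<longrightarrow> fst (kep_restr A B k i mu) = 0"
        using I unfolding inf_regular_def by blast
      show ?thesis
      proof (intro exI allI impI)
        fix mu assume H: "path_in (kep_edges {1..N} A) i mu \<and> kep_act A B k mu = mu \<and> K + Km + 1 \<le> length mu"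
        show "acts_trivially (kep_edges {1..N} A) A B (kep_restr A B k i mu)"
          using Ginf[of mu, THEN spec[of _ K], THEN spec[of _ i], THEN spec[of _ k],
                THEN mp, OF iI, THEN mp, OF K, THEN mp, THEN mp, THEN mp] H by blast
      qed
    qed
  qed
qed

end
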